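(* Let $m=m_n\ge 1$ and let $f=f_n$ be a probability distribution on $\{0,\dots,n\}$ with $(f)_2\lesssim (f)_0$. Let $G_{nmf}$ be the random intersection graph defined in the context. Then, as $n\to\infty$, \[ \mathbb{P}(G_{nmf} \text{ is connected}) \to \begin{cases} 0 & \text{if } \log n - \frac{m}{n}(f)_1 \to +\infty,\\ 1 & \text{if } \log n - \frac{m}{n}(f)_1 \to -\infty.\end{cases} \]
   Context: $G_{nmf}$ is the random graph on node set $\{1,\dots,n\}$ obtained by sampling mutually independent random sets $V_1,\dots,V_m\subset\{1,\dots,n\}$, each with probability mass function $A\mapsto f(|A|)\binom{n}{|A|}^{-1}$, and declaring an unordered pair $\{i,j\}$ of distinct nodes adjacent iff some $V_k$ contains both $i$ and $j$. Moments: $(f)_r=\sum_{x=2}^n x^r f(x)$. $a_n\lesssim b_n$ means $\limsup a_n/|b_n|<\infty$. *)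

theory Defs
  imports "HOL-Analysis.Analysis"
begin

definition moment :: "nat \<Rightarrow> (nat \<Rightarrow> real) \<Rightarrow> nat \<Rightarrow> real" where
  "moment n f r = (\<Sum>x = 2..n. real x ^ r * f x)"

definition is_size_dist :: "nat \<Rightarrow> (nat \<Rightarrow> real) \<Rightarrow> bool" where
  "is_size_dist n f \<longleftrightarrow> (\<forall>x\<in>{0..n}. f x \<ge> 0) \<and> (\<Sum>x = 0..n. f x) = 1"

text \<open>Probability mass of a random set V \<subseteq> {1..n}: A \<mapsto> f(|A|) / binom(n,|A|).\<close>
definition set_prob :: "nat \<Rightarrow> (nat \<Rightarrow> real) \<Rightarrow> nat set \<Rightarrow> real" where
  "set_prob n f A = f (card A) / real (n choose card A)"

definition ig_adj :: "nat \<Rightarrow> (nat \<Rightarrow> nat set) \<Rightarrow> nat \<Rightarrow> nat \<Rightarrow> bool" where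
  "ig_adj m Vs i j \<longleftrightarrow> i \<noteq> j \<and> (\<exists>k<m. i \<in> Vs k \<and> j \<in> Vs k)"

definition ig_connected :: "nat \<Rightarrow> nat \<Rightarrow> (nat \<Rightarrow> nat set) \<Rightarrow> bool" where
  "ig_connected n m Vs \<longleftrightarrow>
     (\<forall>i\<in>{1..n}. \<forall>j\<in>{1..n}. (ig_adj m Vs)\<^sup>*\<^sup>* i j)"

text \<open>P(G_{nmf} is connected), with V_1..V_m independent (indexed 0..m-1).\<close>
definition prob_connected :: "nat \<Rightarrow> nat \<Rightarrow> (nat \<Rightarrow> real) \<Rightarrow> real" where
  "prob_connected n m f =
     (\<Sum>Vs \<in> PiE {..<m} (\<lambda>_. Pow {1..n}).
        (\<Prod>k<m. set_prob n f (Vs k)) * (if ig_connected n m Vs then 1 else 0))"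

end

theory Submission
  imports Defs "HOL-Real_Asymp.Real_Asymp"
begin

lemma choose_step: "Suc x * (k choose Suc x) = (k - x) * (k choose x)"
  using binomial_absorption[of x k] binomial_absorb_comp[of k x] by simp

lemma binom_ratio_nat:
  assumes "k \<le> n"
  shows "real (k choose x) * real n ^ x \<le> real (n choose x) * real k ^ x"
proof (induction x)
  case 0 then show ?case by simp
next
  case (Suc x)
  have e1: "real (Suc x) * real (k choose Suc x) = real (k - x) * real (k choose x)"
    using choose_step[of x k] by (metis of_nat_mult)
  have e2: "real (Suc x) * real (n choose Suc x) = real (n - x) * real (n choose x)"
    using choose_step[of x n] by (metis of_nat_mult)
  have key: "real (k - x) * real n \<le> real (n - x) * real k"
  proof (cases "x \<le> k")
    case True
    then have "x \<le> n" using assms by simp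
    then show ?thesis using True assms by (auto simp: of_nat_diff algebra_simps intro!: mult_right_mono)
  qed simp
  have "real (Suc x) * (real (k choose Suc x) * real n ^ Suc x)
      = (real (Suc x) * real (k choose Suc x)) * real n ^ Suc x" by (simp only: mult.assoc)
  also have "\<dots> = (real (k - x) * real (k choose x)) * real n ^ Suc x" by (simp only: e1)
  also have "\<dots> = (real (k choose x) * real n ^ x) * (real (k - x) * real n)"
    by (simp add: algebra_simps)
  also have "\<dots> \<le> (real (n choose x) * real k ^ x) * (real (k - x) * real n)"
    by (rule mult_right_mono[OF Suc]) simp
  also have "\<dots> \<le> (real (n choose x) * real k ^ x) * (real (n - x) * real k)"
    by (rule mult_left_mono[OF key]) simp
  also have "\<dots> = (real (n - x) * real (n choose x)) * real k ^ Suc x"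
    by (simp add: algebra_simps)
  also have "\<dots> = (real (Suc x) * real (n choose Suc x)) * real k ^ Suc x" by (simp only: e2)
  also have "\<dots> = real (Suc x) * (real (n choose Suc x) * real k ^ Suc x)" by (simp only: mult.assoc)
  finally show ?case by (simp only: mult_le_cancel_left_pos of_nat_0_less_iff zero_less_Suc)
qed

lemma binom_ratio:
  assumes "k \<le> n" "x \<le> n" "0 < n"
  shows "real (k choose x) / real (n choose x) \<le> (real k / real n) ^ x"
proof -
  have "real (n choose x) > 0" using assms by simp
  moreover have "real n ^ x > 0" using assms by simp
  ultimately show ?thesis using binom_ratio_nat[OF assms(1), of x]
    by (simp add: divide_simps power_divide mult.commute)
qed

definition Om :: "nat \<Rightarrow> nat \<Rightarrow> (nat \<Rightarrow> nat set) set" where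
  "Om n m = PiE {..<m} (\<lambda>_. Pow {1..n})"
definition W :: "nat \<Rightarrow> nat \<Rightarrow> (nat \<Rightarrow> real) \<Rightarrow> (nat \<Rightarrow> nat set) \<Rightarrow> real" where
  "W n m f Vs = (\<Prod>k<m. set_prob n f (Vs k))"
definition P1 :: "nat \<Rightarrow> (nat \<Rightarrow> real) \<Rightarrow> (nat set \<Rightarrow> bool) \<Rightarrow> real" where
  "P1 n f E = (\<Sum>A\<in>Pow {1..n}. if E A then set_prob n f A else 0)"
definition EV :: "nat \<Rightarrow> nat \<Rightarrow> (nat \<Rightarrow> real) \<Rightarrow> ((nat \<Rightarrow> nat set) \<Rightarrow> real) \<Rightarrow> real" where
  "EV n m f h = (\<Sum>Vs\<in>Om n m. W n m f Vs * h Vs)"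

lemma finite_Om: "finite (Om n m)"
  unfolding Om_def by (intro finite_PiE) auto

lemma EV_all: "EV n m f (\<lambda>Vs. if \<forall>k<m. E (Vs k) then 1 else 0) = P1 n f E ^ m"
proof -
  have "P1 n f E ^ m = (\<Prod>k<m. \<Sum>A\<in>Pow {1..n}. if E A then set_prob n f A else 0)"
    by (simp add: P1_def)
  also have "\<dots> = (\<Sum>Vs\<in>Om n m. \<Prod>k<m. if E (Vs k) then set_prob n f (Vs k) else 0)"
    unfolding Om_def by (rule prod_sum_PiE) auto
  also have "\<dots> = EV n m f (\<lambda>Vs. if \<forall>k<m. E (Vs k) then 1 else 0)"
    unfolding EV_def W_def
  proof (rule sum.cong[OF refl])
    fix Vs
    show "(\<Prod>k<m. if E (Vs k) then set_prob n f (Vs k) else 0)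
      = (\<Prod>k<m. set_prob n f (Vs k)) * (if \<forall>k<m. E (Vs k) then 1 else 0)"
      by (cases "\<forall>k<m. E (Vs k)") auto
  qed
  finally show ?thesis ..
qed

definition cnt :: "nat \<Rightarrow> (nat set \<Rightarrow> bool) \<Rightarrow> nat \<Rightarrow> nat" where
  "cnt n E x = card {A. A \<subseteq> {1..n} \<and> card A = x \<and> E A}"

lemma P1_eq: "P1 n f E = (\<Sum>x=0..n. f x * (real (cnt n E x) / real (n choose x)))"
proof -
  have fin: "finite (Pow {1..n})" by simp
  have img: "card ` Pow {1..n} \<subseteq> {0..n}"
    by (auto intro!: card_mono[of "{1..n}", simplified])
  have "P1 n f E = (\<Sum>x=0..n. \<Sum>A\<in>{A\<in>Pow {1..n}. card A = x}. if E A then set_prob n f A else 0)"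
    unfolding P1_def by (rule sum.group[OF fin _ img, symmetric]) simp
  also have "\<dots> = (\<Sum>x=0..n. f x * (real (cnt n E x) / real (n choose x)))"
  proof (rule sum.cong[OF refl])
    fix x
    have "(\<Sum>A\<in>{A\<in>Pow {1..n}. card A = x}. if E A then set_prob n f A else 0)
       = (\<Sum>A\<in>{A. A \<subseteq> {1..n} \<and> card A = x \<and> E A}. f x / real (n choose x))"
      by (rule sum.mono_neutral_cong_right) (auto simp: set_prob_def)
    also have "\<dots> = f x * (real (cnt n E x) / real (n choose x))"
      by (simp add: cnt_def)
    finally show "(\<Sum>A\<in>{A\<in>Pow {1..n}. card A = x}. if E A then set_prob n f A else 0)
       = f x * (real (cnt n E x) / real (n choose x))" .
  qed
  finally show ?thesis .
qed


lemma set_prob_nonneg: assumes "is_size_dist n f" "A \<subseteq> {1..n}" shows "set_prob n f A \<ge> 0"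
proof -
  have "card A \<le> card {1..n}" using assms(2) by (intro card_mono) auto
  then have "card A \<le> n" by simp
  then show ?thesis using assms(1) unfolding is_size_dist_def set_prob_def by auto
qed

lemma W_nonneg: assumes "is_size_dist n f" "Vs \<in> Om n m" shows "W n m f Vs \<ge> 0"
proof -
  have "\<forall>k<m. Vs k \<subseteq> {1..n}" using assms(2) by (auto simp: Om_def PiE_def Pi_def)
  then show ?thesis unfolding W_def using assms(1) set_prob_nonneg by (intro prod_nonneg) blast
qed

lemma EV_mono: assumes "is_size_dist n f" "\<And>Vs. Vs \<in> Om n m \<Longrightarrow> h Vs \<le> g Vs"
  shows "EV n m f h \<le> EV n m f g"
  unfolding EV_def using assms W_nonneg by (intro sum_mono mult_left_mono) auto

lemma EV_sum: "EV n m f (\<lambda>Vs. \<Sum>i\<in>I. g i Vs) = (\<Sum>i\<in>I. EV n m f (g i))"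
  unfolding EV_def by (simp add: sum_distrib_left sum.swap[of _ I])

lemma EV_add: "EV n m f (\<lambda>Vs. g Vs + h Vs) = EV n m f g + EV n m f h"
  unfolding EV_def by (simp add: distrib_left sum.distrib)

lemma EV_cmult: "EV n m f (\<lambda>Vs. c * g Vs) = c * EV n m f g"
  unfolding EV_def by (simp add: sum_distrib_left algebra_simps)

lemma EV_one: assumes "is_size_dist n f" shows "EV n m f (\<lambda>Vs. 1) = 1"
proof -
  have "EV n m f (\<lambda>Vs. 1) = EV n m f (\<lambda>Vs. if \<forall>k<m. True then 1 else 0)" by simp
  also have "\<dots> = P1 n f (\<lambda>_. True) ^ m" by (rule EV_all)
  also have "P1 n f (\<lambda>_. True) = 1"
  proof -
    have "P1 n f (\<lambda>_. True) = (\<Sum>x=0..n. f x * (real (cnt n (\<lambda>_. True) x) / real (n choose x)))"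
      by (rule P1_eq)
    also have "\<dots> = (\<Sum>x=0..n. f x)"
      by (rule sum.cong) (auto simp: cnt_def n_subsets[of "{1..n}", simplified])
    finally show ?thesis using assms by (simp add: is_size_dist_def)
  qed
  finally show ?thesis by simp
qed

lemma P1_nonneg: assumes "is_size_dist n f" shows "P1 n f E \<ge> 0"
  unfolding P1_def using set_prob_nonneg[OF assms] by (intro sum_nonneg) auto

lemma P1_le: assumes "is_size_dist n f"
  "\<And>x. x \<le> n \<Longrightarrow> real (cnt n E x) / real (n choose x) \<le> g x"
  shows "P1 n f E \<le> (\<Sum>x=0..n. f x * g x)"
  unfolding P1_eq using assms unfolding is_size_dist_def
  by (intro sum_mono mult_left_mono) auto

lemma sum_from2: "(\<Sum>x=0..n. if 2 \<le> x then h x else 0) = (\<Sum>x=2..(n::nat). h x)"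
  by (rule sum.mono_neutral_cong_right) auto

lemma sum_g: assumes "is_size_dist n f"
  shows "(\<Sum>x=0..n. f x * (if 2 \<le> x then 1 - a x else 1)) = 1 - (\<Sum>x=2..n. f x * a x)"
proof -
  have "(\<Sum>x=0..n. f x * (if 2 \<le> x then 1 - a x else 1))
     = (\<Sum>x=0..n. f x - (if 2 \<le> x then f x * a x else 0))"
    by (rule sum.cong) (auto simp: algebra_simps)
  also have "\<dots> = (\<Sum>x=0..n. f x) - (\<Sum>x=0..n. if 2 \<le> x then f x * a x else 0)"
    by (rule sum_subtractf)
  also have "\<dots> = 1 - (\<Sum>x=2..n. f x * a x)"
    using assms by (simp add: is_size_dist_def sum_from2)
  finally show ?thesis .
qed

lemma cnt_le_choose: "cnt n E x \<le> n choose x"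
proof -
  have "cnt n E x \<le> card {A. A \<subseteq> {1..n} \<and> card A = x}"
    unfolding cnt_def by (rule card_mono) auto
  then show ?thesis using n_subsets[of "{1..n}" x] by simp
qed

lemma ratio_le1: assumes "x \<le> n" shows "real (cnt n E x) / real (n choose x) \<le> 1"
proof -
  have "real (n choose x) > 0" using assms by simp
  then show ?thesis using cnt_le_choose[of n E x] by (simp add: divide_simps)
qed

lemma bonf: fixes s :: real assumes "0 \<le> s" "s \<le> 1"
  shows "(1 - s) ^ x \<le> 1 - real x * s + (real x)^2 * s^2 / 2"
proof (induction x)
  case 0 then show ?case by simp
next
  case (Suc x)
  have "(1 - s) ^ Suc x = (1 - s) * (1 - s) ^ x" by simp
  also have "\<dots> \<le> (1 - s) * (1 - real x * s + (real x)^2 * s^2 / 2)"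
    using Suc assms by (intro mult_left_mono) auto
  also have "\<dots> \<le> 1 - real (Suc x) * s + (real (Suc x))^2 * s^2 / 2"
  proof -
    have "0 \<le> (real x)^2 * s^3 / 2 + s^2 / 2" using assms by simp
    then show ?thesis by (simp add: algebra_simps power2_eq_square power3_eq_cube)
  qed
  finally show ?case .
qed

definition iso :: "nat \<Rightarrow> nat set \<Rightarrow> bool" where
  "iso i A \<longleftrightarrow> \<not> (i \<in> A \<and> 2 \<le> card A)"

lemma P1_iso: assumes "is_size_dist n f" "i \<in> {1..n}"
  shows "P1 n f (iso i) = 1 - moment n f 1 / real n"
proof -
  have n0: "n > 0" using assms by auto
  have r: "real (cnt n (iso i) x) / real (n choose x) = (if 2 \<le> x then 1 - real x / real n else 1)"
    if "x \<le> n" for x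
  proof (cases "2 \<le> x")
    case True
    have "{A. A \<subseteq> {1..n} \<and> card A = x \<and> iso i A} = {A. A \<subseteq> {1..n} - {i} \<and> card A = x}"
      using True by (auto simp: iso_def)
    then have c: "cnt n (iso i) x = (n - 1) choose x"
      unfolding cnt_def using n_subsets[of "{1..n} - {i}" x] assms(2) by simp
    have "real (n - x) * real (n choose x) = real n * real ((n - 1) choose x)"
      using binomial_absorb_comp[of n x] by (metis of_nat_mult)
    moreover have "real (n choose x) > 0" using that by simp
    ultimately show ?thesis using c True that n0 by (simp add: divide_simps of_nat_diff algebra_simps)
  next
    case False
    have "{A. A \<subseteq> {1..n} \<and> card A = x \<and> iso i A} = {A. A \<subseteq> {1..n} \<and> card A = x}"
      using False by (auto simp: iso_def)
    then have "cnt n (iso i) x = n choose x"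
      unfolding cnt_def using n_subsets[of "{1..n}" x] by simp
    then show ?thesis using False that by simp
  qed
  have "P1 n f (iso i) = (\<Sum>x=0..n. f x * (if 2 \<le> x then 1 - real x / real n else 1))"
    unfolding P1_eq by (rule sum.cong) (auto simp: r)
  also have "\<dots> = 1 - (\<Sum>x=2..n. f x * (real x / real n))" by (rule sum_g[OF assms(1)])
  also have "(\<Sum>x=2..n. f x * (real x / real n)) = moment n f 1 / real n"
    unfolding moment_def by (simp add: sum_divide_distrib algebra_simps)
  finally show ?thesis .
qed

lemma P1_iso2: assumes "is_size_dist n f" "i \<in> {1..n}" "j \<in> {1..n}" "i \<noteq> j"
  shows "P1 n f (\<lambda>A. iso i A \<and> iso j A) \<le> 1 - 2 * moment n f 1 / real n + 2 * moment n f 2 / (real n)^2"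
proof -
  have n2: "n \<ge> 2" using assms by auto
  have r: "real (cnt n (\<lambda>A. iso i A \<and> iso j A) x) / real (n choose x)
      \<le> (if 2 \<le> x then 1 - (2 * real x / real n - 2 * (real x)^2 / (real n)^2) else 1)"
    if "x \<le> n" for x
  proof (cases "2 \<le> x")
    case True
    have "{A. A \<subseteq> {1..n} \<and> card A = x \<and> iso i A \<and> iso j A} \<subseteq> {A. A \<subseteq> {1..n} - {i,j} \<and> card A = x}"
      using True by (auto simp: iso_def)
    then have "cnt n (\<lambda>A. iso i A \<and> iso j A) x \<le> card {A. A \<subseteq> {1..n} - {i,j} \<and> card A = x}"
      unfolding cnt_def by (intro card_mono) auto
    also have "\<dots> = (n - 2) choose x"
      using n_subsets[of "{1..n} - {i,j}" x] assms by (simp add: card_Diff_subset numeral_2_eq_2)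
    finally have c: "real (cnt n (\<lambda>A. iso i A \<and> iso j A) x) \<le> real ((n - 2) choose x)" by simp
    have cp: "real (n choose x) > 0" using that by simp
    have "real (cnt n (\<lambda>A. iso i A \<and> iso j A) x) / real (n choose x) \<le> real ((n - 2) choose x) / real (n choose x)"
      using c cp by (simp add: divide_right_mono)
    also have "\<dots> \<le> (real (n - 2) / real n) ^ x" using binom_ratio[of "n-2" n x] that n2 by simp
    also have "real (n - 2) / real n = 1 - 2 / real n" using n2 by (simp add: of_nat_diff divide_simps)
    also have "(1 - 2 / real n) ^ x \<le> 1 - real x * (2 / real n) + (real x)^2 * (2 / real n)^2 / 2"
      using n2 by (intro bonf) auto
    also have "\<dots> = 1 - (2 * real x / real n - 2 * (real x)^2 / (real n)^2)"
      by (simp add: power2_eq_square field_simps)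
    finally show ?thesis using True by simp
  next
    case False
    then show ?thesis using ratio_le1[OF that] by simp
  qed
  have "P1 n f (\<lambda>A. iso i A \<and> iso j A) \<le> (\<Sum>x=0..n. f x * (if 2 \<le> x then 1 - (2 * real x / real n - 2 * (real x)^2 / (real n)^2) else 1))"
    by (rule P1_le[OF assms(1) r])
  also have "\<dots> = 1 - (\<Sum>x=2..n. f x * (2 * real x / real n - 2 * (real x)^2 / (real n)^2))"
    by (rule sum_g[OF assms(1)])
  also have "(\<Sum>x=2..n. f x * (2 * real x / real n - 2 * (real x)^2 / (real n)^2))
     = 2 * moment n f 1 / real n - 2 * moment n f 2 / (real n)^2"
    unfolding moment_def by (simp add: sum_subtractf sum_divide_distrib sum_distrib_left algebra_simps)
  finally show ?thesis by simp
qed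


definition nc :: "nat set \<Rightarrow> nat set \<Rightarrow> bool" where
  "nc S A \<longleftrightarrow> A \<subseteq> S \<or> A \<inter> S = {}"

lemma nc_ratio: assumes "S \<subseteq> {1..n}" "card S = k" "x \<le> n" "0 < n"
  shows "real (cnt n (nc S) x) / real (n choose x) \<le> (real k / real n) ^ x + (1 - real k / real n) ^ x"
proof -
  have kn: "k \<le> n" using assms card_mono[OF _ assms(1)] by fastforce
  have "{A. A \<subseteq> {1..n} \<and> card A = x \<and> nc S A} \<subseteq> {A. A \<subseteq> S \<and> card A = x} \<union> {A. A \<subseteq> {1..n} - S \<and> card A = x}"
    by (auto simp: nc_def)
  moreover have "finite S" using assms(1) finite_subset by blast
  moreover have "finite {A. A \<subseteq> S \<and> card A = x}" by (rule finite_subset[of _ "Pow S"]) (auto simp: \<open>finite S\<close>)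
  moreover have "finite {A. A \<subseteq> {1..n} - S \<and> card A = x}" by (rule finite_subset[of _ "Pow {1..n}"]) auto
  ultimately have "cnt n (nc S) x \<le> card ({A. A \<subseteq> S \<and> card A = x} \<union> {A. A \<subseteq> {1..n} - S \<and> card A = x})"
    unfolding cnt_def by (intro card_mono) auto
  also have "\<dots> \<le> card {A. A \<subseteq> S \<and> card A = x} + card {A. A \<subseteq> {1..n} - S \<and> card A = x}"
    by (rule card_Un_le)
  also have "\<dots> = (k choose x) + ((n - k) choose x)"
    using n_subsets[of S x] n_subsets[of "{1..n} - S" x] assms finite_subset[OF assms(1)]
    by (simp add: card_Diff_subset)
  finally have c: "real (cnt n (nc S) x) \<le> real (k choose x) + real ((n - k) choose x)" by linarith
  have cp: "real (n choose x) > 0" using assms by simp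
  have "real (cnt n (nc S) x) / real (n choose x) \<le> (real (k choose x) + real ((n - k) choose x)) / real (n choose x)"
    using c cp by (simp add: divide_right_mono)
  also have "\<dots> = real (k choose x) / real (n choose x) + real ((n - k) choose x) / real (n choose x)"
    by (simp add: add_divide_distrib)
  also have "\<dots> \<le> (real k / real n) ^ x + (real (n - k) / real n) ^ x"
    using binom_ratio[OF kn assms(3,4)] binom_ratio[of "n-k" n x] assms by (intro add_mono) auto
  also have "real (n - k) / real n = 1 - real k / real n" using kn assms by (simp add: of_nat_diff divide_simps)
  finally show ?thesis .
qed

lemma P1_ncA: assumes "is_size_dist n f" "S \<subseteq> {1..n}" "card S = k" "0 < n" "2 * k \<le> n"
  shows "P1 n f (nc S) \<le> 1 - real k / real n * moment n f 0"
proof -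
  define t where "t = real k / real n"
  have t0: "0 \<le> t" and t2: "t \<le> 1/2" using assms by (auto simp: t_def divide_simps)
  have r: "real (cnt n (nc S) x) / real (n choose x) \<le> (if 2 \<le> x then 1 - t else 1)"
    if "x \<le> n" for x
  proof (cases "2 \<le> x")
    case True
    have "real (cnt n (nc S) x) / real (n choose x) \<le> t ^ x + (1 - t) ^ x"
      using nc_ratio[OF assms(2,3) that assms(4)] by (simp add: t_def)
    also have "\<dots> \<le> t ^ 2 + (1 - t) ^ 2"
      using t0 t2 True by (intro add_mono power_decreasing) auto
    also have "\<dots> \<le> 1 - t" using mult_left_mono[of "t*2" 1 t] t0 t2 by (simp add: power2_eq_square algebra_simps)
    finally show ?thesis using True by simp
  qed (use ratio_le1[OF that] in simp)
  have "P1 n f (nc S) \<le> (\<Sum>x=0..n. f x * (if 2 \<le> x then 1 - t else 1))" by (rule P1_le[OF assms(1) r])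
  also have "\<dots> = 1 - (\<Sum>x=2..n. f x * t)" by (rule sum_g[OF assms(1)])
  also have "(\<Sum>x=2..n. f x * t) = t * moment n f 0" unfolding moment_def by (simp add: sum_distrib_left algebra_simps)
  finally show ?thesis by (simp add: t_def)
qed

lemma P1_ncB: assumes "is_size_dist n f" "S \<subseteq> {1..n}" "card S = k" "0 < n"
  shows "P1 n f (nc S) \<le> 1 - real k / real n * moment n f 1
            + (real k / real n)^2 * (moment n f 0 + moment n f 2 / 2)"
proof -
  define t where "t = real k / real n"
  have kn: "k \<le> n" using assms card_mono[OF _ assms(2)] by fastforce
  have t0: "0 \<le> t" and t1: "t \<le> 1" using assms kn by (auto simp: t_def divide_simps)
  have r: "real (cnt n (nc S) x) / real (n choose x) \<le> (if 2 \<le> x then 1 - (real x * t - (real x)^2 * t^2 / 2 - t^2) else 1)"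
    if "x \<le> n" for x
  proof (cases "2 \<le> x")
    case True
    have "real (cnt n (nc S) x) / real (n choose x) \<le> t ^ x + (1 - t) ^ x"
      using nc_ratio[OF assms(2,3) that assms(4)] by (simp add: t_def)
    also have "\<dots> \<le> t ^ 2 + (1 - real x * t + (real x)^2 * t^2 / 2)"
      using t0 t1 True by (intro add_mono power_decreasing bonf) auto
    finally show ?thesis using True by simp
  qed (use ratio_le1[OF that] in simp)
  have "P1 n f (nc S) \<le> (\<Sum>x=0..n. f x * (if 2 \<le> x then 1 - (real x * t - (real x)^2 * t^2 / 2 - t^2) else 1))"
    by (rule P1_le[OF assms(1) r])
  also have "\<dots> = 1 - (\<Sum>x=2..n. f x * (real x * t - (real x)^2 * t^2 / 2 - t^2))" by (rule sum_g[OF assms(1)])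
  also have "(\<Sum>x=2..n. f x * (real x * t - (real x)^2 * t^2 / 2 - t^2))
      = t * moment n f 1 - t^2 * (moment n f 0 + moment n f 2 / 2)"
    unfolding moment_def by (simp add: sum_subtractf sum_distrib_left sum_divide_distrib sum.distrib algebra_simps)
  finally show ?thesis by (simp add: t_def algebra_simps)
qed

lemma conn_not_iso:
  assumes "ig_connected n m Vs" "2 \<le> n" "Vs \<in> Om n m" "i \<in> {1..n}"
  shows "\<exists>k<m. \<not> iso i (Vs k)"
proof -
  define j where "j = (if i = 1 then 2 else (1::nat))"
  have j: "j \<in> {1..n}" "j \<noteq> i" using assms by (auto simp: j_def)
  have "(ig_adj m Vs)\<^sup>*\<^sup>* i j" using assms(1,4) j unfolding ig_connected_def by blast
  then obtain y where "ig_adj m Vs i y" using j(2) by (metis converse_rtranclpE)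
  then obtain k where k: "k < m" "i \<noteq> y" "i \<in> Vs k" "y \<in> Vs k" unfolding ig_adj_def by auto
  have "Vs k \<subseteq> {1..n}" using assms(3) k(1) by (auto simp: Om_def PiE_def Pi_def)
  then have "card {i, y} \<le> card (Vs k)" using k by (intro card_mono) (auto intro: finite_subset)
  then have "2 \<le> card (Vs k)" using k(2) by simp
  then show ?thesis using k by (auto simp: iso_def)
qed

lemma disconn_cut:
  assumes "\<not> ig_connected n m Vs" "Vs \<in> Om n m"
  shows "\<exists>S. S \<subseteq> {1..n} \<and> S \<noteq> {} \<and> 2 * card S \<le> n \<and> (\<forall>k<m. nc S (Vs k))"
proof -
  have sub: "Vs k \<subseteq> {1..n}" if "k < m" for k using assms(2) that by (auto simp: Om_def PiE_def Pi_def)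
  obtain i j where ij: "i \<in> {1..n}" "j \<in> {1..n}" "\<not> (ig_adj m Vs)\<^sup>*\<^sup>* i j"
    using assms(1) unfolding ig_connected_def by blast
  define R where "R = {y \<in> {1..n}. (ig_adj m Vs)\<^sup>*\<^sup>* i y}"
  have iR: "i \<in> R" using ij by (simp add: R_def)
  have jR: "j \<notin> R" using ij by (simp add: R_def)
  have ncR: "nc R (Vs k)" if "k < m" for k
  proof (rule ccontr)
    assume "\<not> nc R (Vs k)"
    then obtain a b where ab: "a \<in> Vs k" "a \<in> R" "b \<in> Vs k" "b \<notin> R" unfolding nc_def by blast
    then have "a \<noteq> b" by auto
    then have "ig_adj m Vs a b" using ab that unfolding ig_adj_def by blast
    moreover have "(ig_adj m Vs)\<^sup>*\<^sup>* i a" using ab by (simp add: R_def)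
    ultimately have "(ig_adj m Vs)\<^sup>*\<^sup>* i b" by (meson rtranclp.rtrancl_into_rtrancl)
    moreover have "b \<in> {1..n}" using sub[OF that] ab by auto
    ultimately show False using ab by (simp add: R_def)
  qed
  have Rsub: "R \<subseteq> {1..n}" by (auto simp: R_def)
  show ?thesis
  proof (cases "2 * card R \<le> n")
    case True then show ?thesis using Rsub iR ncR by blast
  next
    case False
    define T where "T = {1..n} - R"
    have "card T = n - card R" using Rsub by (simp add: T_def card_Diff_subset finite_subset)
    then have "2 * card T \<le> n" using False by simp
    moreover have "T \<noteq> {}" using ij jR by (auto simp: T_def)
    moreover have "nc T (Vs k)" if "k < m" for k
      using ncR[OF that] sub[OF that] by (auto simp: nc_def T_def)
    ultimately show ?thesis by (auto simp: T_def)
  qed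
qed


lemma prob_connected_EV: "prob_connected n m f = EV n m f (\<lambda>Vs. if ig_connected n m Vs then 1 else 0)"
  unfolding prob_connected_def EV_def W_def Om_def by simp

lemma part1_bound:
  assumes dist: "is_size_dist n f" and n2: "2 \<le> n"
    and qpos: "1 - moment n f 1 / real n > 0"
  defines "q \<equiv> 1 - moment n f 1 / real n"
    and "B \<equiv> 1 - 2 * moment n f 1 / real n + 2 * moment n f 2 / (real n)^2"
  shows "prob_connected n m f \<le> 1 / (real n * q ^ m) + B ^ m / q ^ (2 * m) - 1"
proof -
  define \<mu> where "\<mu> = real n * q ^ m"
  have qp: "q > 0" using qpos by (simp add: q_def)
  have mup: "\<mu> > 0" using qp n2 by (simp add: \<mu>_def)
  define I where "I i Vs = (if \<forall>k<m. iso i (Vs k) then 1 else (0::real))" for i Vs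
  define X where "X Vs = (\<Sum>i\<in>{1..n}. I i Vs)" for Vs
  have EI: "EV n m f (I i) = q ^ m" if "i \<in> {1..n}" for i
    unfolding I_def EV_all P1_iso[OF dist that] q_def by simp
  have EX: "EV n m f X = \<mu>"
  proof -
    have "EV n m f X = (\<Sum>i\<in>{1..n}. EV n m f (I i))" unfolding X_def by (rule EV_sum)
    also have "\<dots> = (\<Sum>i\<in>{1..n}. q ^ m)" by (rule sum.cong) (auto simp: EI)
    finally show ?thesis by (simp add: \<mu>_def)
  qed
  have B0: "B ^ m \<ge> 0"
  proof -
    obtain i j where ij: "i \<in> {1..n}" "j \<in> {1..n}" "i \<noteq> (j::nat)" using n2 by (intro that[of 1 2]) auto
    have "0 \<le> B" using P1_iso2[OF dist ij] P1_nonneg[OF dist, of "\<lambda>A. iso i A \<and> iso j A"] unfolding B_def by linarith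
    then show ?thesis by simp
  qed
  have EII: "EV n m f (\<lambda>Vs. I i Vs * I j Vs) \<le> (if j = i then q ^ m else 0) + B ^ m"
    if "i \<in> {1..n}" "j \<in> {1..n}" for i j
  proof -
    have "EV n m f (\<lambda>Vs. I i Vs * I j Vs) = EV n m f (\<lambda>Vs. if \<forall>k<m. iso i (Vs k) \<and> iso j (Vs k) then 1 else 0)"
      unfolding I_def by (rule arg_cong[where f="EV n m f"]) auto
    also have "\<dots> = P1 n f (\<lambda>A. iso i A \<and> iso j A) ^ m" by (rule EV_all)
    finally have e: "EV n m f (\<lambda>Vs. I i Vs * I j Vs) = P1 n f (\<lambda>A. iso i A \<and> iso j A) ^ m" .
    show ?thesis
    proof (cases "j = i")
      case True
      then show ?thesis using e P1_iso[OF dist that(1)] B0 by (simp add: q_def)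
    next
      case False
      have "P1 n f (\<lambda>A. iso i A \<and> iso j A) ^ m \<le> B ^ m"
        using P1_iso2[OF dist that False[symmetric]] P1_nonneg[OF dist] unfolding B_def
        by (intro power_mono) auto
      then show ?thesis using e False by simp
    qed
  qed
  have EX2: "EV n m f (\<lambda>Vs. (X Vs)^2) \<le> \<mu> + (real n)^2 * B ^ m"
  proof -
    have "EV n m f (\<lambda>Vs. (X Vs)^2) = EV n m f (\<lambda>Vs. \<Sum>i\<in>{1..n}. \<Sum>j\<in>{1..n}. I i Vs * I j Vs)"
      unfolding X_def power2_eq_square sum_product by simp
    also have "\<dots> = (\<Sum>i\<in>{1..n}. \<Sum>j\<in>{1..n}. EV n m f (\<lambda>Vs. I i Vs * I j Vs))"
      by (simp add: EV_sum)
    also have "\<dots> \<le> (\<Sum>i\<in>{1..n}. \<Sum>j\<in>{1..n}. (if j = i then q ^ m else 0) + B ^ m)"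
      by (intro sum_mono EII) auto
    also have "\<dots> = (\<Sum>i\<in>{1..n}. q ^ m + real n * B ^ m)"
      by (rule sum.cong) (auto simp: sum.distrib)
    also have "\<dots> = \<mu> + (real n)^2 * B ^ m" by (simp add: \<mu>_def power2_eq_square algebra_simps)
    finally show ?thesis .
  qed
  have pw: "(if ig_connected n m Vs then 1 else 0) \<le> (1 / \<mu>^2) * (X Vs)^2 + ((-2 / \<mu>) * X Vs + 1)"
    if "Vs \<in> Om n m" for Vs
  proof (cases "ig_connected n m Vs")
    case True
    have "I i Vs = 0" if "i \<in> {1..n}" for i
      using conn_not_iso[OF True n2 \<open>Vs \<in> Om n m\<close> that] by (auto simp: I_def)
    then have "X Vs = 0" by (simp add: X_def)
    then show ?thesis by simp
  next
    case False
    have "0 \<le> (X Vs / \<mu> - 1)^2" by simp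
    also have "(X Vs / \<mu> - 1)^2 = (1 / \<mu>^2) * (X Vs)^2 + ((-2 / \<mu>) * X Vs + 1)"
      using mup by (simp add: power2_eq_square field_simps)
    finally show ?thesis using False by simp
  qed
  have "prob_connected n m f \<le> EV n m f (\<lambda>Vs. (1 / \<mu>^2) * (X Vs)^2 + ((-2 / \<mu>) * X Vs + 1))"
    unfolding prob_connected_EV by (rule EV_mono[OF dist pw])
  also have "\<dots> = (1 / \<mu>^2) * EV n m f (\<lambda>Vs. (X Vs)^2) + ((-2 / \<mu>) * EV n m f X + 1)"
    by (simp only: EV_add EV_cmult EV_one[OF dist])
  also have "\<dots> \<le> (1 / \<mu>^2) * (\<mu> + (real n)^2 * B ^ m) + ((-2 / \<mu>) * \<mu> + 1)"
    unfolding EX using EX2 mup by (intro add_right_mono mult_left_mono) auto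
  also have "\<dots> = 1 / (real n * q ^ m) + B ^ m / q ^ (2 * m) - 1"
    using mup qp n2 by (simp add: \<mu>_def field_simps power_mult_distrib power_mult power2_eq_square)
  finally show ?thesis .
qed


lemma pow_le_exp: fixes p a :: real assumes "0 \<le> p" "p \<le> 1 - a"
  shows "p ^ m \<le> exp (- (real m * a))"
proof -
  have "p ^ m \<le> (exp (- a)) ^ m"
    using assms by (intro power_mono) (auto intro: order.trans[OF _ exp_ge_add_one_self[of "-a"]])
  also have "\<dots> = exp (- (real m * a))" by (simp add: exp_of_nat_mult[symmetric])
  finally show ?thesis .
qed

lemma part2_generic:
  assumes dist: "is_size_dist n f"
    and bnd: "\<And>S. S \<subseteq> {1..n} \<Longrightarrow> card S \<in> {1..n div 2} \<Longrightarrow> P1 n f (nc S) ^ m \<le> b (card S)"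
  shows "1 - prob_connected n m f \<le> (\<Sum>k=1..n div 2. real (n choose k) * b k)"
proof -
  define SS where "SS = {S. S \<subseteq> {1..n} \<and> S \<noteq> {} \<and> 2 * card S \<le> n}"
  have finSS: "finite SS" unfolding SS_def by (rule finite_subset[of _ "Pow {1..n}"]) auto
  define J where "J S Vs = (if \<forall>k<m. nc S (Vs k) then 1 else (0::real))" for S Vs
  have pw: "1 - (if ig_connected n m Vs then 1 else 0) \<le> (\<Sum>S\<in>SS. J S Vs)" if Vs: "Vs \<in> Om n m" for Vs
  proof (cases "ig_connected n m Vs")
    case True then show ?thesis by (simp add: J_def sum_nonneg)
  next
    case False
    then obtain S where S: "S \<subseteq> {1..n}" "S \<noteq> {}" "2 * card S \<le> n" "\<forall>k<m. nc S (Vs k)"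
      using disconn_cut[OF False Vs] by blast
    then have "S \<in> SS" by (simp add: SS_def)
    then have "J S Vs \<le> (\<Sum>S\<in>SS. J S Vs)" using finSS by (intro member_le_sum) (auto simp: J_def)
    then show ?thesis using S False by (simp add: J_def)
  qed
  have "1 - prob_connected n m f = EV n m f (\<lambda>Vs. 1 + (-1) * (if ig_connected n m Vs then 1 else 0))"
    by (simp only: EV_add EV_cmult EV_one[OF dist] prob_connected_EV)
  also have "\<dots> \<le> EV n m f (\<lambda>Vs. \<Sum>S\<in>SS. J S Vs)"
    using pw by (intro EV_mono[OF dist]) auto
  also have "\<dots> = (\<Sum>S\<in>SS. P1 n f (nc S) ^ m)" unfolding EV_sum J_def EV_all by simp
  also have "\<dots> \<le> (\<Sum>S\<in>SS. b (card S))"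
  proof (rule sum_mono)
    fix S assume "S \<in> SS"
    then have "S \<subseteq> {1..n}" "card S \<in> {1..n div 2}"
      using finite_subset[of S "{1..n}"] by (auto simp: SS_def card_gt_0_iff Suc_le_eq)
    then show "P1 n f (nc S) ^ m \<le> b (card S)" by (rule bnd)
  qed
  also have "\<dots> = (\<Sum>k=1..n div 2. \<Sum>S\<in>{S\<in>SS. card S = k}. b (card S))"
  proof (rule sum.group[symmetric, OF finSS])
    show "card ` SS \<subseteq> {1..n div 2}"
      using finite_subset[of _ "{1..n}"] by (auto simp: SS_def card_gt_0_iff Suc_le_eq)
  qed simp
  also have "\<dots> = (\<Sum>k=1..n div 2. real (n choose k) * b k)"
  proof (rule sum.cong[OF refl])
    fix k assume k: "k \<in> {1..n div 2}"
    have "{S\<in>SS. card S = k} = {S. S \<subseteq> {1..n} \<and> card S = k}"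
      using k by (auto simp: SS_def)
    then show "(\<Sum>S\<in>{S\<in>SS. card S = k}. b (card S)) = real (n choose k) * b k"
      using n_subsets[of "{1..n}" k] by simp
  qed
  finally show ?thesis .
qed

lemma part2_bound:
  assumes dist: "is_size_dist n f" and n1: "1 \<le> n"
  shows "1 - prob_connected n m f \<le> (\<Sum>k=1..n div 2. real (n choose k) *
     min (exp (- (real m * (real k / real n * moment n f 1 - (real k / real n)^2 * (moment n f 0 + moment n f 2 / 2)))))
         (exp (- (real m * (real k / real n * moment n f 0)))))"
proof (rule part2_generic[OF dist])
  fix S assume S: "S \<subseteq> {1..n}" "card S \<in> {1..n div 2}"
  have p0: "0 \<le> P1 n f (nc S)" by (rule P1_nonneg[OF dist])
  have "2 * card S \<le> n" using S by auto
  have n0: "0 < n" using n1 by simp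
  define t where "t = real (card S) / real n"
  have A: "P1 n f (nc S) \<le> 1 - t * moment n f 0"
    using P1_ncA[OF dist S(1) refl n0 \<open>2 * card S \<le> n\<close>] by (simp add: t_def)
  have B: "P1 n f (nc S) \<le> 1 - (t * moment n f 1 - t^2 * (moment n f 0 + moment n f 2 / 2))"
    using P1_ncB[OF dist S(1) refl n0] by (simp add: t_def)
  show "P1 n f (nc S) ^ m \<le> min (exp (- (real m * (real (card S) / real n * moment n f 1 - (real (card S) / real n)^2 * (moment n f 0 + moment n f 2 / 2)))))
         (exp (- (real m * (real (card S) / real n * moment n f 0))))"
    using pow_le_exp[OF p0 B, of m] pow_le_exp[OF p0 A, of m] unfolding t_def by simp
qed


lemma mom_nonneg: assumes "is_size_dist n f" shows "moment n f r \<ge> 0"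
  using assms unfolding moment_def is_size_dist_def by (intro sum_nonneg) auto

lemma M0_le1: assumes "is_size_dist n f" shows "moment n f 0 \<le> 1"
proof -
  have "moment n f 0 = (\<Sum>x=2..n. f x)" by (simp add: moment_def)
  also have "\<dots> \<le> (\<Sum>x=0..n. f x)" using assms unfolding is_size_dist_def by (intro sum_mono2) auto
  finally show ?thesis using assms by (simp add: is_size_dist_def)
qed

lemma M1_le_M2: assumes "is_size_dist n f" shows "moment n f 1 \<le> moment n f 2 / 2"
proof -
  have "moment n f 1 \<le> (\<Sum>x=2..n. real x ^ 2 * f x / 2)"
    unfolding moment_def
  proof (rule sum_mono)
    fix x assume x: "x \<in> {2..n}"
    then have "real x \<le> real x ^ 2 / 2" by (simp add: power2_eq_square)
    then show "real x ^ 1 * f x \<le> real x ^ 2 * f x / 2"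
      using x assms mult_right_mono[of "real x" "real x ^ 2 / 2" "f x"] unfolding is_size_dist_def by simp
  qed
  also have "\<dots> = moment n f 2 / 2" by (simp add: moment_def sum_divide_distrib)
  finally show ?thesis .
qed

lemma M0_le_M1: assumes "is_size_dist n f" shows "moment n f 0 \<le> moment n f 1 / 2"
proof -
  have "moment n f 0 \<le> (\<Sum>x=2..n. real x * f x / 2)"
    unfolding moment_def
  proof (rule sum_mono)
    fix x assume x: "x \<in> {2..n}"
    then have "1 \<le> real x / 2" by simp
    then show "real x ^ 0 * f x \<le> real x * f x / 2"
      using x assms mult_right_mono[of 1 "real x / 2" "f x"] unfolding is_size_dist_def by simp
  qed
  also have "\<dots> = moment n f 1 / 2" by (simp add: moment_def sum_divide_distrib)
  finally show ?thesis .
qed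

lemma prob_bounds: assumes "is_size_dist n f"
  shows "0 \<le> prob_connected n m f" "prob_connected n m f \<le> 1"
proof -
  have "0 = EV n m f (\<lambda>Vs. 0)" by (simp add: EV_def)
  also have "\<dots> \<le> prob_connected n m f" unfolding prob_connected_EV by (rule EV_mono[OF assms]) auto
  finally show "0 \<le> prob_connected n m f" .
  have "prob_connected n m f \<le> EV n m f (\<lambda>Vs. 1)" unfolding prob_connected_EV by (rule EV_mono[OF assms]) auto
  then show "prob_connected n m f \<le> 1" using EV_one[OF assms] by simp
qed

lemma geom_le: fixes r :: real assumes "0 \<le> r" "r \<le> 1/2"
  shows "(\<Sum>k=1..N. r ^ k) \<le> 2 * r"
proof -
  have e: "(1 - r) * (\<Sum>k=1..N. r ^ k) = r - r ^ Suc N"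
  proof (induction N)
    case 0 then show ?case by simp
  next
    case (Suc N)
    have "(1 - r) * (\<Sum>k=1..Suc N. r ^ k) = (1 - r) * (\<Sum>k=1..N. r ^ k) + (1 - r) * r ^ Suc N"
      by (simp add: distrib_left)
    also have "\<dots> = r - r ^ Suc (Suc N)" using Suc by (simp add: algebra_simps)
    finally show ?case .
  qed
  have p: "0 \<le> r ^ Suc N" using assms by simp
  have rr: "r * (2 * r) \<le> r * 1" using assms by (intro mult_left_mono) auto
  have "(1 - r) * (2 * r) = 2 * r - r * (2 * r)" by (simp add: algebra_simps)
  then have "(1 - r) * (\<Sum>k=1..N. r ^ k) \<le> (1 - r) * (2 * r)" using e p rr by linarith
  then show ?thesis using assms by (simp add: mult_le_cancel_left)
qed

lemma pow_le_exp_fact: "real k ^ k \<le> exp (real k) * fact k"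
proof -
  have s: "summable (\<lambda>j. real k ^ j / fact j)"
    using exp_converges[of "real k"] by (simp add: sums_iff divide_inverse mult.commute)
  have "real k ^ k / fact k = (\<Sum>j\<in>{k}. real k ^ j / fact j)" by simp
  also have "\<dots> \<le> (\<Sum>j. real k ^ j / fact j)" by (rule sum_le_suminf[OF s]) auto
  also have "\<dots> = exp (real k)" using exp_converges[of "real k"] by (simp add: sums_iff divide_inverse mult.commute)
  finally show ?thesis by (simp add: divide_simps)
qed

lemma binom_le_enk: assumes "1 \<le> k" shows "real (n choose k) \<le> (exp 1 * real n / real k) ^ k"
proof -
  have "real (n choose k) * fact k \<le> real n ^ k" using binomial_fact_pow[of n k]
    by (metis of_nat_fact of_nat_le_iff of_nat_mult of_nat_power)
  then have a: "real (n choose k) \<le> real n ^ k / fact k" by (simp add: divide_simps)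
  have "real n ^ k / fact k \<le> real n ^ k * exp (real k) / real k ^ k"
  proof -
    have "real k ^ k * real n ^ k \<le> (exp (real k) * fact k) * real n ^ k"
      using pow_le_exp_fact[of k] by (rule mult_right_mono) simp
    then show ?thesis using assms by (simp add: divide_simps mult.commute mult.left_commute)
  qed
  also have "\<dots> = (exp 1 * real n / real k) ^ k"
    by (simp add: power_mult_distrib power_divide exp_of_nat_mult[symmetric] mult.commute)
  finally show ?thesis using a by linarith
qed


lemma part1_final:
  assumes dist: "is_size_dist n f" and n2: "2 \<le> n" and K1: "1 \<le> K" and Kn: "2 * K \<le> real n"
    and mk: "moment n f 2 \<le> K * moment n f 0"
    and om: "real m / real n * moment n f 1 \<le> ln (real n)"
  shows "prob_connected n m f \<le> exp (- (ln (real n) - real m / real n * moment n f 1) + K * ln (real n) / real n)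
           + exp (2 * K * ln (real n) / real n) - 1"
proof -
  define M0 where "M0 = moment n f 0"
  define M1 where "M1 = moment n f 1"
  define M2 where "M2 = moment n f 2"
  define L where "L = real m / real n * M1"
  define y where "y = M1 / real n"
  have npos: "real n > 0" using n2 by simp
  have M0p: "0 \<le> M0" and M1p: "0 \<le> M1" using mom_nonneg[OF dist] by (auto simp: M0_def M1_def)
  have M01: "M0 \<le> M1 / 2" using M0_le_M1[OF dist] by (simp add: M0_def M1_def)
  have M12: "M1 \<le> M2 / 2" using M1_le_M2[OF dist] by (simp add: M1_def M2_def)
  have M0_1: "M0 \<le> 1" using M0_le1[OF dist] by (simp add: M0_def)
  have mk': "M2 \<le> K * M0" using mk by (simp add: M0_def M2_def)
  have "K * M0 \<le> K * 1" using M0_1 K1 by (intro mult_left_mono) auto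
  then have M1K: "M1 \<le> K / 2" using M12 mk' by linarith
  have y0: "0 \<le> y" using M1p npos by (simp add: y_def)
  have yK: "y \<le> K / (2 * real n)" using M1K npos by (simp add: y_def divide_simps)
  have "K / (2 * real n) \<le> 1/4" using Kn npos by (simp add: divide_simps)
  then have y4: "y \<le> 1/4" using yK by linarith
  define q where "q = 1 - y"
  have qpos: "1 - moment n f 1 / real n > 0" using y4 unfolding y_def M1_def by linarith
  have q34: "3/4 \<le> q" using y4 by (simp add: q_def)
  have L0: "0 \<le> L" using M1p npos by (simp add: L_def)
  have Lln: "L \<le> ln (real n)" using om by (simp add: L_def M1_def)
  have my: "real m * y = L" by (simp add: L_def y_def)
  define B where "B = 1 - 2 * moment n f 1 / real n + 2 * moment n f 2 / (real n)^2"
  have main: "prob_connected n m f \<le> 1 / (real n * q ^ m) + B ^ m / q ^ (2 * m) - 1"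
    using part1_bound[OF dist n2 qpos] by (simp add: q_def y_def M1_def B_def)
  have lnq: "- y - 2 * y^2 \<le> ln q" unfolding q_def using y0 y4 by (intro ln_one_minus_pos_lower_bound) auto
  have "real m * (2 * y^2) = 2 * L * y" using my by (simp add: power2_eq_square algebra_simps)
  also have "\<dots> \<le> 2 * ln (real n) * (K / (2 * real n))"
    using L0 Lln y0 yK by (intro mult_mono) auto
  also have "\<dots> = K * ln (real n) / real n" by (simp add: field_simps)
  finally have m2y: "real m * (2 * y^2) \<le> K * ln (real n) / real n" .
  have "ln (real n) - L - K * ln (real n) / real n \<le> ln (real n) + real m * ln q"
  proof -
    have "real m * (- y - 2 * y^2) \<le> real m * ln q" using lnq by (intro mult_left_mono) auto
    then show ?thesis using my m2y by (simp add: algebra_simps)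
  qed
  then have "exp (ln (real n) - L - K * ln (real n) / real n) \<le> exp (ln (real n) + real m * ln q)" by simp
  also have "\<dots> = real n * q ^ m"
  proof -
    have "exp (real m * ln q) = q ^ m" using q34 by (simp add: exp_of_nat_mult)
    then show ?thesis using npos by (simp add: exp_add)
  qed
  finally have nq: "exp (ln (real n) - L - K * ln (real n) / real n) \<le> real n * q ^ m" .
  have t1: "1 / (real n * q ^ m) \<le> exp (- (ln (real n) - L) + K * ln (real n) / real n)"
  proof -
    have "1 / (real n * q ^ m) \<le> 1 / exp (ln (real n) - L - K * ln (real n) / real n)"
      using nq npos q34 by (intro divide_left_mono) (auto intro!: mult_pos_pos)
    also have "\<dots> = exp (- (ln (real n) - L - K * ln (real n) / real n))"
      by (simp only: exp_minus inverse_eq_divide)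
    also have "\<dots> = exp (- (ln (real n) - L) + K * ln (real n) / real n)"
      by (rule arg_cong[where f=exp]) simp
    finally show ?thesis .
  qed
  have "(3/4)^2 \<le> q^2" using q34 by (intro power_mono) auto
  then have qq: "1/2 \<le> q^2" by (simp add: power2_eq_square)
  have B0: "0 \<le> B" using y4 mom_nonneg[OF dist, of 2] npos by (simp add: B_def y_def M1_def)
  have "B = q^2 + 2 * M2 / (real n)^2 - y^2"
    unfolding B_def q_def y_def M1_def M2_def using npos by (simp add: power2_eq_square field_simps)
  then have "B \<le> q^2 + 2 * M2 / (real n)^2" by simp
  also have "\<dots> \<le> q^2 * (1 + 4 * M2 / (real n)^2)"
  proof -
    have "0 \<le> M2" using mom_nonneg[OF dist] by (simp add: M2_def)
    then have "(1/2) * (4 * M2 / (real n)^2) \<le> q^2 * (4 * M2 / (real n)^2)"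
      using qq by (intro mult_right_mono) auto
    then show ?thesis by (simp add: algebra_simps)
  qed
  finally have Bq: "B / q^2 \<le> 1 + 4 * M2 / (real n)^2" using q34 by (simp add: divide_simps mult.commute)
  have "B ^ m / q ^ (2 * m) = (B / q^2) ^ m" by (simp add: power_divide power_mult)
  also have "\<dots> \<le> (exp (4 * M2 / (real n)^2)) ^ m"
    using Bq B0 q34 by (intro power_mono) (auto intro: order.trans[OF _ exp_ge_add_one_self])
  also have "\<dots> = exp (real m * (4 * M2 / (real n)^2))" by (simp add: exp_of_nat_mult[symmetric])
  also have "\<dots> \<le> exp (2 * K * ln (real n) / real n)"
  proof -
    have "real m * M2 \<le> real m * (K * M0)" using mk' by (intro mult_left_mono) auto
    also have "\<dots> \<le> real m * (K * (M1 / 2))" using M01 K1 by (intro mult_left_mono) auto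
    also have "\<dots> = K * L * real n / 2" using npos by (simp add: L_def field_simps)
    also have "\<dots> \<le> K * ln (real n) * real n / 2" using Lln K1 npos by (intro divide_right_mono mult_right_mono mult_left_mono) auto
    finally have "real m * M2 \<le> K * ln (real n) * real n / 2" .
    then have "real m * (4 * M2 / (real n)^2) \<le> 2 * K * ln (real n) / real n"
      using npos by (simp add: field_simps power2_eq_square)
    then show ?thesis by simp
  qed
  finally have t2: "B ^ m / q ^ (2 * m) \<le> exp (2 * K * ln (real n) / real n)" .
  show ?thesis using main t1 t2 by (simp add: L_def M1_def)
qed


lemma part2_final:
  assumes dist: "is_size_dist n f" and n3: "3 \<le> n" and K1: "1 \<le> K"
    and mk: "moment n f 2 \<le> K * moment n f 0"
    and Lam: "ln (real n) \<le> real m / real n * moment n f 1"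
    and D2: "2 * (1/2 + K/4) \<le> ln (real n)"
    and r2: "exp ((1/2 + K/4) - (real m / real n * moment n f 1 - ln (real n)) / 2) \<le> 1/2"
    and s2: "exp 1 * ln (real n) * exp (- 2 * ln (real n) / K) \<le> 1/2"
  shows "1 - prob_connected n m f \<le> 2 * exp ((1/2 + K/4) - (real m / real n * moment n f 1 - ln (real n)) / 2)
            + 2 * (exp 1 * ln (real n) * exp (- 2 * ln (real n) / K))"
proof -
  define M0 where "M0 = moment n f 0"
  define M1 where "M1 = moment n f 1"
  define M2 where "M2 = moment n f 2"
  define L where "L = real m / real n * M1"
  define D where "D = 1/2 + K/4"
  define \<Lambda> where "\<Lambda> = L - ln (real n)"
  define r where "r = exp (D - \<Lambda> / 2)"
  define s where "s = exp 1 * ln (real n) * exp (- 2 * ln (real n) / K)"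
  have npos: "real n > 0" using n3 by simp
  have lnpos: "ln (real n) > 0" using n3 by simp
  have M0p: "0 \<le> M0" and M1p: "0 \<le> M1" using mom_nonneg[OF dist] by (auto simp: M0_def M1_def)
  have M01: "M0 \<le> M1 / 2" using M0_le_M1[OF dist] by (simp add: M0_def M1_def)
  have M12: "M1 \<le> M2 / 2" using M1_le_M2[OF dist] by (simp add: M1_def M2_def)
  have mk': "M2 \<le> K * M0" using mk by (simp add: M0_def M2_def)
  have L0: "0 \<le> L" using M1p npos by (simp add: L_def)
  have Lam0: "0 \<le> \<Lambda>" using Lam by (simp add: \<Lambda>_def L_def M1_def)
  have D0: "0 \<le> D" using K1 by (simp add: D_def)
  have r0: "0 \<le> r" and r12: "r \<le> 1/2" using r2 by (simp_all add: r_def D_def \<Lambda>_def L_def M1_def)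
  have s0: "0 \<le> s" using lnpos by (simp add: s_def)
  have s12: "s \<le> 1/2" using s2 by (simp add: s_def)
  have MD: "M0 + M2 / 2 \<le> D * M1"
  proof -
    have "K * M0 \<le> K * (M1 / 2)" using M01 K1 by (intro mult_left_mono) auto
    then show ?thesis using M01 mk' by (simp add: D_def algebra_simps)
  qed
  have M0K: "2 * M1 / K \<le> M0"
  proof -
    have "2 * M1 \<le> K * M0" using M12 mk' by linarith
    then show ?thesis using K1 by (simp add: divide_simps mult.commute)
  qed
  have tm: "real (n choose k) *
     min (exp (- (real m * (real k / real n * M1 - (real k / real n)^2 * (M0 + M2 / 2)))))
         (exp (- (real m * (real k / real n * M0)))) \<le> r ^ k + s ^ k"
    if k: "k \<in> {1..n div 2}" for k
  proof -
    define t where "t = real k / real n"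
    have t0: "0 \<le> t" by (simp add: t_def)
    have kn: "k \<le> n" using k by auto
    have mtM1: "real m * (t * M1) = real k * L" using npos by (simp add: t_def L_def field_simps)
    have e1: "exp (- (real m * (t * M1 - t^2 * (M0 + M2 / 2)))) \<le> exp (- (real k * (L * (1 - D * t))))"
    proof -
      have "real m * (t^2 * (M0 + M2 / 2)) \<le> real m * (t^2 * (D * M1))"
        using MD by (intro mult_left_mono) auto
      also have "\<dots> = real k * L * D * t" using mtM1 by (simp add: power2_eq_square algebra_simps)
      finally show ?thesis using mtM1 by (simp add: algebra_simps)
    qed
    have e2: "exp (- (real m * (t * M0))) \<le> exp (- (real k * (2 * L / K)))"
    proof -
      have "real m * (t * (2 * M1 / K)) \<le> real m * (t * M0)"
        using M0K t0 by (intro mult_left_mono) auto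
      moreover have "real m * (t * (2 * M1 / K)) = real k * (2 * L / K)"
        using mtM1 by (simp add: algebra_simps)
      ultimately have "real k * (2 * L / K) \<le> real m * (t * M0)" by linarith
      then show ?thesis by simp
    qed
    have c0: "0 \<le> real (n choose k)" by simp
    show ?thesis
    proof (cases "real k * ln (real n) \<le> real n")
      case True
      have tl: "t \<le> 1 / ln (real n)" using True lnpos npos by (simp add: t_def divide_simps mult.commute)
      have "L * D * t \<le> L * D * (1 / ln (real n))" using tl L0 D0 by (intro mult_left_mono) auto
      also have "\<dots> = D + \<Lambda> * (D / ln (real n))" using lnpos by (simp add: \<Lambda>_def field_simps)
      also have "\<dots> \<le> D + \<Lambda> * (1/2)"
        using Lam0 D2 lnpos by (intro add_left_mono mult_left_mono) (auto simp: D_def divide_simps)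
      finally have h: "L * D * t \<le> D + \<Lambda> * (1/2)" .
      define x where "x = L * D * t"
      have eq: "L * (1 - D * t) = L - x" by (simp add: x_def algebra_simps)
      have ex: "ln (real n) - L * (1 - D * t) \<le> D - \<Lambda> / 2"
        unfolding eq using h unfolding \<Lambda>_def x_def[symmetric] by (simp add: field_simps)
      have "real (n choose k) \<le> real n ^ k" using binomial_le_pow[OF kn] by (metis of_nat_le_iff of_nat_power)
      also have "\<dots> = exp (real k * ln (real n))" using npos by (simp add: exp_of_nat_mult)
      finally have cb: "real (n choose k) \<le> exp (real k * ln (real n))" .
      have "real (n choose k) * min (exp (- (real m * (t * M1 - t^2 * (M0 + M2 / 2))))) (exp (- (real m * (t * M0))))
          \<le> exp (real k * ln (real n)) * exp (- (real k * (L * (1 - D * t))))"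
        using cb order.trans[OF min.cobounded1 e1] by (intro mult_mono) auto
      also have "\<dots> = exp (real k * (ln (real n) - L * (1 - D * t)))" by (simp add: exp_add[symmetric] algebra_simps)
      also have "\<dots> \<le> exp (real k * (D - \<Lambda> / 2))" using ex by (simp add: mult_left_mono)
      also have "\<dots> = r ^ k" by (simp add: r_def exp_of_nat_mult)
      finally have "real (n choose k) * min (exp (- (real m * (t * M1 - t^2 * (M0 + M2 / 2))))) (exp (- (real m * (t * M0)))) \<le> r ^ k" .
      then show ?thesis using zero_le_power[OF s0, of k] unfolding t_def by linarith
    next
      case False
      have k1: "1 \<le> k" using k by simp
      have "real (n choose k) \<le> (exp 1 * real n / real k) ^ k" by (rule binom_le_enk[OF k1])
      also have "\<dots> \<le> (exp 1 * ln (real n)) ^ k"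
      proof (intro power_mono)
        have "real n / real k \<le> ln (real n)" using False k1 by (simp add: divide_simps mult.commute)
        then show "exp 1 * real n / real k \<le> exp 1 * ln (real n)" by (simp add: mult_left_mono times_divide_eq_right[symmetric] del: times_divide_eq_right)
      qed simp
      finally have cb: "real (n choose k) \<le> (exp 1 * ln (real n)) ^ k" .
      have "exp (- (real k * (2 * L / K))) \<le> exp (- (real k * (2 * ln (real n) / K)))"
      proof -
        have "ln (real n) \<le> L" using Lam by (simp add: L_def M1_def)
        then have "real k * (2 * ln (real n) / K) \<le> real k * (2 * L / K)"
          using K1 by (intro mult_left_mono divide_right_mono) auto
        then show ?thesis by simp
      qed
      with e2 have e2': "exp (- (real m * (t * M0))) \<le> exp (- 2 * ln (real n) / K) ^ k"
        by (simp add: exp_of_nat_mult[symmetric] algebra_simps)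
      have "real (n choose k) * min (exp (- (real m * (t * M1 - t^2 * (M0 + M2 / 2))))) (exp (- (real m * (t * M0))))
          \<le> (exp 1 * ln (real n)) ^ k * exp (- 2 * ln (real n) / K) ^ k"
        using cb order.trans[OF min.cobounded2 e2'] lnpos by (intro mult_mono) auto
      also have "\<dots> = s ^ k" by (simp add: s_def power_mult_distrib)
      finally have "real (n choose k) * min (exp (- (real m * (t * M1 - t^2 * (M0 + M2 / 2))))) (exp (- (real m * (t * M0)))) \<le> s ^ k" .
      then show ?thesis using zero_le_power[OF r0, of k] unfolding t_def by linarith
    qed
  qed
  have "1 - prob_connected n m f \<le> (\<Sum>k=1..n div 2. real (n choose k) *
     min (exp (- (real m * (real k / real n * M1 - (real k / real n)^2 * (M0 + M2 / 2)))))
         (exp (- (real m * (real k / real n * M0)))))"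
    using part2_bound[OF dist, of m] n3 by (simp add: M0_def M1_def M2_def)
  also have "\<dots> \<le> (\<Sum>k=1..n div 2. r ^ k + s ^ k)" by (intro sum_mono tm)
  also have "\<dots> = (\<Sum>k=1..n div 2. r ^ k) + (\<Sum>k=1..n div 2. s ^ k)" by (rule sum.distrib)
  also have "\<dots> \<le> 2 * r + 2 * s" using geom_le[OF r0 r12] geom_le[OF s0 s12] by (intro add_mono)
  finally show ?thesis by (simp add: r_def s_def D_def \<Lambda>_def L_def M1_def)
qed


theorem mainTheorem3:
  fixes m :: "nat \<Rightarrow> nat" and f :: "nat \<Rightarrow> nat \<Rightarrow> real"
  assumes m_pos: "\<And>n. m n \<ge> 1"
    and dist: "\<And>n. is_size_dist n (f n)"
    and mom: "\<exists>C. \<forall>\<^sub>F n in sequentially. moment n (f n) 2 \<le> C * \<bar>moment n (f n) 0\<bar>"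
  shows "(filterlim (\<lambda>n. ln (real n) - real (m n) / real n * moment n (f n) 1) at_top sequentially
            \<longrightarrow> (\<lambda>n. prob_connected n (m n) (f n)) \<longlonglongrightarrow> 0)
       \<and> (filterlim (\<lambda>n. ln (real n) - real (m n) / real n * moment n (f n) 1) at_bot sequentially
            \<longrightarrow> (\<lambda>n. prob_connected n (m n) (f n)) \<longlonglongrightarrow> 1)"
proof -
  obtain C where evC: "\<forall>\<^sub>F n in sequentially. moment n (f n) 2 \<le> C * \<bar>moment n (f n) 0\<bar>"
    using mom by blast
  define K where "K = max C 1"
  have K1: "1 \<le> K" by (simp add: K_def)
  have evK: "\<forall>\<^sub>F n in sequentially. moment n (f n) 2 \<le> K * moment n (f n) 0"
    using evC
  proof eventually_elim
    case (elim n)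
    have M0: "0 \<le> moment n (f n) 0" by (rule mom_nonneg[OF dist])
    have "C * moment n (f n) 0 \<le> K * moment n (f n) 0" using M0 by (intro mult_right_mono) (auto simp: K_def)
    then show ?case using elim M0 by simp
  qed
  define \<omega> where "\<omega> n = ln (real n) - real (m n) / real n * moment n (f n) 1" for n
  have lnn: "((\<lambda>n. ln (real n) / real n) \<longlongrightarrow> 0) sequentially" by real_asymp
  have part1: "(\<lambda>n. prob_connected n (m n) (f n)) \<longlonglongrightarrow> 0" if h: "filterlim \<omega> at_top sequentially"
  proof -
    define u where "u n = exp (- \<omega> n + K * ln (real n) / real n) + exp (2 * K * ln (real n) / real n) - 1" for n
    have ev: "\<forall>\<^sub>F n in sequentially. prob_connected n (m n) (f n) \<le> u n"
    proof -
      have e1: "\<forall>\<^sub>F n in sequentially. 0 \<le> \<omega> n" using h unfolding filterlim_at_top by blast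
      have e2: "\<forall>\<^sub>F n in sequentially. nat \<lceil>2 * K\<rceil> + 2 \<le> n" by (rule eventually_ge_at_top)
      show ?thesis using e1 e2 evK
      proof eventually_elim
        case (elim n)
        have n2: "2 \<le> n" using elim by simp
        have "2 * K \<le> real (nat \<lceil>2 * K\<rceil>)" by linarith
        also have "\<dots> \<le> real n"
        proof -
          have "nat \<lceil>2 * K\<rceil> \<le> n" using elim(2) by linarith
          then show ?thesis by (simp only: of_nat_le_iff)
        qed
        finally have Kn: "2 * K \<le> real n" .
        show ?case using part1_final[OF dist n2 K1 Kn elim(3)] elim(1)
          by (simp add: u_def \<omega>_def)
      qed
    qed
    have ut: "u \<longlonglongrightarrow> 0"
    proof -
      have a1: "((\<lambda>n. K * (ln (real n) / real n)) \<longlongrightarrow> K * 0) sequentially" by (intro tendsto_intros lnn)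
      have a2: "filterlim (\<lambda>n. - (K * (ln (real n) / real n)) + \<omega> n) at_top sequentially"
        by (rule filterlim_tendsto_add_at_top[OF _ h]) (use a1 in \<open>auto intro: tendsto_eq_intros\<close>)
      have a3: "filterlim (\<lambda>n. - \<omega> n + K * ln (real n) / real n) at_bot sequentially"
        unfolding filterlim_uminus_at_bot using a2 by (simp add: algebra_simps)
      have b1: "((\<lambda>n. exp (- \<omega> n + K * ln (real n) / real n)) \<longlongrightarrow> 0) sequentially"
        by (rule filterlim_compose[OF exp_at_bot a3])
      have b2: "((\<lambda>n. exp (2 * K * (ln (real n) / real n)) - 1) \<longlongrightarrow> exp (2 * K * 0) - 1) sequentially"
        by (intro tendsto_intros lnn)
      have "((\<lambda>n. exp (- \<omega> n + K * ln (real n) / real n) + (exp (2 * K * (ln (real n) / real n)) - 1)) \<longlongrightarrow> 0 + (exp (2 * K * 0) - 1)) sequentially"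
        by (rule tendsto_add[OF b1 b2])
      moreover have "u = (\<lambda>n. exp (- \<omega> n + K * ln (real n) / real n) + (exp (2 * K * (ln (real n) / real n)) - 1))"
        by (rule ext) (simp add: u_def)
      ultimately show ?thesis by simp
    qed
    show ?thesis
      by (rule tendsto_sandwich[OF _ ev tendsto_const ut]) (simp add: prob_bounds[OF dist])
  qed
  have part2: "(\<lambda>n. prob_connected n (m n) (f n)) \<longlonglongrightarrow> 1" if h: "filterlim \<omega> at_bot sequentially"
  proof -
    define \<Lambda> where "\<Lambda> n = real (m n) / real n * moment n (f n) 1 - ln (real n)" for n
    define r where "r n = exp ((1/2 + K/4) - \<Lambda> n / 2)" for n
    define s where "s n = exp 1 * ln (real n) * exp (- 2 * ln (real n) / K)" for n
    have hL: "filterlim \<Lambda> at_top sequentially"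
    proof -
      have "\<Lambda> = (\<lambda>n. - \<omega> n)" by (rule ext) (simp add: \<Lambda>_def \<omega>_def)
      then show ?thesis using h unfolding filterlim_uminus_at_bot by simp
    qed
    have rt: "r \<longlonglongrightarrow> 0"
    proof -
      have a1: "filterlim (\<lambda>n. (1/2) * \<Lambda> n) at_top sequentially"
        by (rule filterlim_tendsto_pos_mult_at_top[OF tendsto_const _ hL]) simp
      have a2: "filterlim (\<lambda>n. (- (1/2 + K/4)) + (1/2) * \<Lambda> n) at_top sequentially"
        by (rule filterlim_tendsto_add_at_top[OF tendsto_const a1])
      have eq: "(\<lambda>n. (1/2 + K/4) - \<Lambda> n / 2) = (\<lambda>n. - ((- (1/2 + K/4)) + (1/2) * \<Lambda> n))"
        by (rule ext) simp
      have "filterlim (\<lambda>n. (1/2 + K/4) - \<Lambda> n / 2) at_bot sequentially"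
        unfolding eq filterlim_uminus_at_bot minus_minus by (rule a2)
      then show ?thesis unfolding r_def by (rule filterlim_compose[OF exp_at_bot])
    qed
    have st: "s \<longlonglongrightarrow> 0" unfolding s_def using K1 by real_asymp
    have lnt: "filterlim (\<lambda>n. ln (real n)) at_top sequentially" by real_asymp
    have ev: "\<forall>\<^sub>F n in sequentially. 1 - prob_connected n (m n) (f n) \<le> 2 * r n + 2 * s n"
    proof -
      have e1: "\<forall>\<^sub>F n in sequentially. 0 \<le> \<Lambda> n" using hL unfolding filterlim_at_top by blast
      have e2: "\<forall>\<^sub>F n in sequentially. 3 \<le> n" by (rule eventually_ge_at_top)
      have e3: "\<forall>\<^sub>F n in sequentially. 2 * (1/2 + K/4) \<le> ln (real n)" using lnt unfolding filterlim_at_top by blast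
      have e4: "\<forall>\<^sub>F n in sequentially. r n < 1/2" by (rule order_tendstoD(2)[OF rt]) simp
      have e5: "\<forall>\<^sub>F n in sequentially. s n < 1/2" by (rule order_tendstoD(2)[OF st]) simp
      show ?thesis using e1 e2 e3 e4 e5 evK
      proof eventually_elim
        case (elim n)
        have Lam: "ln (real n) \<le> real (m n) / real n * moment n (f n) 1" using elim(1) by (simp add: \<Lambda>_def)
        show ?case using part2_final[OF dist elim(2) K1 elim(6) Lam elim(3)] elim(4,5)
          by (simp add: r_def s_def \<Lambda>_def)
      qed
    qed
    have "((\<lambda>n. 2 * r n + 2 * s n) \<longlongrightarrow> 2 * 0 + 2 * 0) sequentially" by (intro tendsto_intros rt st)
    then have bt: "((\<lambda>n. 2 * r n + 2 * s n) \<longlongrightarrow> 0) sequentially" by simp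
    have "((\<lambda>n. 1 - prob_connected n (m n) (f n)) \<longlongrightarrow> 0) sequentially"
      by (rule tendsto_sandwich[OF _ ev tendsto_const bt]) (simp add: prob_bounds[OF dist])
    then have "((\<lambda>n. 1 - (1 - prob_connected n (m n) (f n))) \<longlongrightarrow> 1 - 0) sequentially"
      by (intro tendsto_intros)
    then show ?thesis by simp
  qed
  show ?thesis using part1 part2 unfolding \<omega>_def[abs_def] by blast
qed

end
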